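(* For every $n\ge 1$, $s(n)\le \lfloor \log_2 p_n\rfloor$.
   Context: $p_n$ denotes the $n$-th prime ($p_1=2$). For an integer $k\ge 3$, say that a positive integer $m$ is represented by $F_k$ if there exist integers $1\le x_1\le x_2\le\dots\le x_k$ with $x_1x_2\cdots x_k+x_1+\dots+x_k=m$. For $n\ge 1$, $s(n)$ is the smallest integer $k\ge 3$ such that $p_n+k-3$ is represented by $F_k$, and $s(n)=0$ if no such $k\ge 3$ exists. *)

theory Defs
  imports Complex_Main "HOL-Computational_Algebra.Primes"
begin

fun prime_seq :: "nat \<Rightarrow> nat" where
  "prime_seq 0 = 2"
| "prime_seq (Suc k) = (LEAST q. prime q \<and> prime_seq k < q)"

text \<open>p n is the n-th prime, with p 1 = 2 (only meaningful for n \<ge> 1).\<close>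
definition p :: "nat \<Rightarrow> nat" where
  "p n = prime_seq (n - 1)"

text \<open>m is represented by F_k: there are integers 1 \<le> x_1 \<le> ... \<le> x_k with
  x_1 * ... * x_k + x_1 + ... + x_k = m.\<close>
definition represented_by :: "nat \<Rightarrow> nat \<Rightarrow> bool" where
  "represented_by k m \<longleftrightarrow>
     (\<exists>xs :: int list. length xs = k \<and> sorted xs \<and> (\<forall>x\<in>set xs. 1 \<le> x)
        \<and> prod_list xs + sum_list xs = int m)"

definition s :: "nat \<Rightarrow> nat" where
  "s n = (if \<exists>k\<ge>3. represented_by k (p n + k - 3)
          then (LEAST k. 3 \<le> k \<and> represented_by k (p n + k - 3))
          else 0)"

end

theory Submission
  imports Defs
begin

lemma prime_seq_prime: "prime (prime_seq k)"
proof (induction k)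
  case 0 then show ?case by simp
next
  case (Suc k)
  obtain q where "prime q \<and> prime_seq k < q" using bigger_prime by blast
  then show ?case by (simp, metis (mono_tags, lifting) LeastI_ex)
qed

lemma filt_sum: "\<forall>x\<in>set xs. (1::int) \<le> x \<Longrightarrow>
  sum_list xs = sum_list (filter (\<lambda>x. 2 \<le> x) xs) + int (length xs - length (filter (\<lambda>x. 2 \<le> x) xs))"
proof (induction xs)
  case Nil then show ?case by simp
next
  case (Cons a xs)
  have "length (filter (\<lambda>x. 2 \<le> x) xs) \<le> length xs" by (rule length_filter_le)
  with Cons show ?case by (auto simp: of_nat_diff Suc_diff_le)
qed

lemma filt_prod: "\<forall>x\<in>set xs. (1::int) \<le> x \<Longrightarrow>
  prod_list xs = prod_list (filter (\<lambda>x. 2 \<le> x) xs)"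
  by (induction xs) auto

lemma prod_ge: "\<forall>x\<in>set ys. (2::int) \<le> x \<Longrightarrow> 2 ^ length ys \<le> prod_list ys"
proof (induction ys)
  case Nil then show ?case by simp
next
  case (Cons a ys)
  then have "2 ^ length ys \<le> prod_list ys" "2 \<le> a" by auto
  then show ?case by (simp add: mult_mono)
qed

lemma sum_ge: "\<forall>x\<in>set ys. (2::int) \<le> x \<Longrightarrow> 2 * int (length ys) \<le> sum_list ys"
  by (induction ys) auto

theorem proposition4:
  fixes n :: nat
  assumes "n \<ge> 1"
  shows "int (s n) \<le> \<lfloor>log 2 (real (p n))\<rfloor>"
proof -
  define P where "P = p n"
  have pr: "prime P" unfolding P_def p_def by (rule prime_seq_prime)
  have P2: "P \<ge> 2" using pr prime_ge_2_nat by blast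
  have lg0: "0 \<le> log 2 (real P)" using P2 by simp
  show ?thesis
  proof (cases "\<exists>k\<ge>3. represented_by k (p n + k - 3)")
    case False
    then have "s n = 0" unfolding s_def by auto
    then show ?thesis using lg0 unfolding P_def by simp
  next
    case True
    then obtain k where k3: "k \<ge> 3" and rk: "represented_by k (P + k - 3)"
      unfolding P_def by blast
    then obtain xs where xl: "length xs = k" and xso: "sorted xs" and x1: "\<forall>x\<in>set xs. 1 \<le> x"
      and xe: "prod_list xs + sum_list xs = int (P + k - 3)"
      unfolding represented_by_def by blast
    define ys where "ys = filter (\<lambda>x. (2::int) \<le> x) xs"
    define j where "j = length ys"
    have y2: "\<forall>x\<in>set ys. 2 \<le> x" unfolding ys_def by simp
    have jk: "j \<le> k" unfolding j_def ys_def using xl length_filter_le by metis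
    have eq: "prod_list ys + sum_list ys = int P - 3 + int j"
      using xe filt_sum[OF x1] filt_prod[OF x1] jk k3 P2 xl
      unfolding ys_def j_def by (simp add: of_nat_diff)
    have pg: "2 ^ j \<le> prod_list ys" using prod_ge[OF y2] j_def by simp
    have sg: "2 * int j \<le> sum_list ys" using sum_ge[OF y2] j_def by simp
    have j3: "j \<ge> 3"
    proof (rule ccontr)
      assume "\<not> j \<ge> 3"
      then have "j = 0 \<or> j = 1 \<or> j = 2" by auto
      moreover have "j \<noteq> 0"
      proof
        assume "j = 0" then have "ys = []" using j_def by simp
        then have "P = 4" using eq `j = 0` by simp
        then show False using pr prime_odd_nat[of P] by simp
      qed
      moreover have "j \<noteq> 1"
      proof
        assume "j = 1" then obtain a where "ys = [a]" using j_def by (metis One_nat_def length_0_conv length_Suc_conv)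
        then have "int P = 2 * a + 2" "a \<ge> 2" using eq y2 `j = 1` by auto
        then have "int P = int (2 * nat (a + 1))" "P \<noteq> 2" by simp_all
        then have "P = 2 * nat (a + 1)" "P \<noteq> 2" by (simp only: of_nat_eq_iff)+
        then have "2 dvd P" "P \<noteq> 2" by auto
        then show False using pr unfolding prime_nat_iff by force
      qed
      moreover have "j \<noteq> 2"
      proof
        assume "j = 2" then obtain a b where ab: "ys = [a, b]" using j_def
          by (metis (no_types) length_0_conv length_Suc_conv numeral_2_eq_2)
        then have e: "int P = (a + 1) * (b + 1)" "a \<ge> 2" "b \<ge> 2" using eq y2 `j = 2` by (auto simp: algebra_simps)
        define A where "A = nat (a+1)"
        define B where "B = nat (b+1)"
        have AB: "A \<ge> 3" "B \<ge> 3" using e A_def B_def by auto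
        have "int P = int A * int B" using e A_def B_def by simp
        then have PAB: "P = A * B" by (simp only: of_nat_mult[symmetric] of_nat_eq_iff)
        have "A * 1 < A * B" using AB by (intro mult_strict_left_mono) auto
        then have "A dvd P" "A \<noteq> 1" "A \<noteq> P" using PAB AB by auto
        then show False using pr unfolding prime_nat_iff by blast
      qed
      ultimately show False by blast
    qed
    have pj: "2 ^ j \<le> int P" using pg sg eq j3 by linarith
    have rj: "represented_by j (P + j - 3)"
      unfolding represented_by_def
    proof (intro exI conjI)
      show "length ys = j" by (simp add: j_def)
      show "sorted ys" unfolding ys_def using xso sorted_wrt_filter by blast
      show "\<forall>x\<in>set ys. 1 \<le> x" using y2 by auto
      show "prod_list ys + sum_list ys = int (P + j - 3)" using eq j3 by (simp add: of_nat_diff)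
    qed
    have "s n = (LEAST k. 3 \<le> k \<and> represented_by k (p n + k - 3))"
      using True s_def by simp
    also have "\<dots> \<le> j" by (rule Least_le) (use j3 rj P_def in simp)
    finally have sj: "s n \<le> j" .
    have "real (2 ^ j) \<le> real P" using pj by (metis of_int_le_iff of_int_of_nat_eq of_nat_numeral of_nat_power)
    then have "real j \<le> log 2 (real P)" by (intro le_log_of_power) auto
    then have "int j \<le> \<lfloor>log 2 (real P)\<rfloor>" by (simp add: le_floor_iff)
    moreover have "int (s n) \<le> int j" using sj by simp
    ultimately show ?thesis using P_def by simp
  qed
qed

end
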